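(* Let $\alpha,\alpha'$ be probability distributions on $[d]$, $n\ge1$, $\lambda\sim\mathrm{SW}^n(\alpha)$, $\lambda'\sim\mathrm{SW}^n(\alpha')$, and $\underline\lambda=\lambda/n$, $\underline\lambda'=\lambda'/n$. Then for every $k\in[d]$, \[ \big|\mathbb E[\underline\lambda_1+\cdots+\underline\lambda_k]-\mathbb E[\underline\lambda'_1+\cdots+\underline\lambda'_k]\big|\le d_{TV}(\alpha,\alpha'),\qquad \big|\mathbb E[\underline\lambda_k]-\mathbb E[\underline\lambda'_k]\big|\le 2\,d_{TV}(\alpha,\alpha'). \]
   Context: $d_{TV}(\alpha,\alpha')=\tfrac12\sum_i|\alpha_i-\alpha'_i|$. $\mathrm{SW}^n(\alpha)$ is the law of the RSK shape $\mathrm{shRSK}(\boldsymbol w)$ (Young diagram whose first $k$ rows sum to the maximum total length of $k$ disjoint weakly increasing subsequences of $\boldsymbol w$), where $\boldsymbol w\in[d]^n$ has i.i.d. letters with law $\alpha$. *)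

theory Defs
  imports "HOL-Analysis.Analysis"
begin

definition prob_dist :: "nat \<Rightarrow> (nat \<Rightarrow> real) \<Rightarrow> bool" where
  "prob_dist d \<alpha> \<longleftrightarrow> (\<forall>i\<in>{1..d}. 0 \<le> \<alpha> i) \<and> (\<Sum>i=1..d. \<alpha> i) = 1"

definition d_TV :: "nat \<Rightarrow> (nat \<Rightarrow> real) \<Rightarrow> (nat \<Rightarrow> real) \<Rightarrow> real" where
  "d_TV d \<alpha> \<beta> = (1/2) * (\<Sum>i=1..d. \<bar>\<alpha> i - \<beta> i\<bar>)"

definition words :: "nat \<Rightarrow> nat \<Rightarrow> nat list set" where
  "words d n = {w. length w = n \<and> set w \<subseteq> {1..d}}"

definition word_prob :: "(nat \<Rightarrow> real) \<Rightarrow> nat list \<Rightarrow> real" where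
  "word_prob \<alpha> w = (\<Prod>i<length w. \<alpha> (w ! i))"

definition incr_set :: "nat list \<Rightarrow> nat set \<Rightarrow> bool" where
  "incr_set w I \<longleftrightarrow> I \<subseteq> {..<length w} \<and> (\<forall>i\<in>I. \<forall>j\<in>I. i < j \<longrightarrow> w ! i \<le> w ! j)"

text \<open>Maximum total length of k disjoint weakly increasing subsequences of w
  (= sum of the first k rows of the RSK shape).\<close>
definition greene :: "nat list \<Rightarrow> nat \<Rightarrow> nat" where
  "greene w k = Max {card (\<Union>i<k. F i) | F.
      (\<forall>i<k. incr_set w (F i)) \<and> (\<forall>i<k. \<forall>j<k. i \<noteq> j \<longrightarrow> F i \<inter> F j = {})}"

definition shRSK :: "nat list \<Rightarrow> nat \<Rightarrow> nat" where
  "shRSK w k = greene w k - greene w (k - 1)"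

text \<open>Expectation of f(lambda) for lambda ~ SW^n(alpha), i.e. over words w of
  length n with i.i.d. letters of law alpha, of f applied to the word.\<close>
definition E_SW :: "nat \<Rightarrow> nat \<Rightarrow> (nat \<Rightarrow> real) \<Rightarrow> (nat list \<Rightarrow> real) \<Rightarrow> real" where
  "E_SW d n \<alpha> f = (\<Sum>w\<in>words d n. word_prob \<alpha> w * f w)"

end

theory Submission
  imports Defs
begin

lemma words_0: "words d 0 = {[]}"
  by (auto simp: words_def)

lemma words_Suc: "words d (Suc n) = (\<lambda>(a,w). a # w) ` ({1..d} \<times> words d n)"
  apply (auto simp: words_def image_iff)
  by (metis length_Suc_conv list.set_intros(1) list.set_intros(2) set_ConsD subsetD subsetI)

lemma finite_words: "finite (words d n)"
  by (induction n) (auto simp: words_0 words_Suc)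

lemma word_prob_Cons: "word_prob \<alpha> (a # w) = \<alpha> a * word_prob \<alpha> w"
  unfolding word_prob_def by (simp only: length_Cons prod.lessThan_Suc_shift) simp

lemma E_Suc: "E_SW d (Suc n) \<alpha> f = (\<Sum>a=1..d. \<alpha> a * E_SW d n \<alpha> (\<lambda>w. f (a # w)))"
proof -
  have inj: "inj_on (\<lambda>(a,w). a # w) ({1..d} \<times> words d n)"
    by (auto simp: inj_on_def)
  have "E_SW d (Suc n) \<alpha> f = (\<Sum>p\<in>{1..d} \<times> words d n. word_prob \<alpha> (fst p # snd p) * f (fst p # snd p))"
    unfolding E_SW_def words_Suc by (subst sum.reindex[OF inj]) (simp add: case_prod_beta)
  also have "\<dots> = (\<Sum>a=1..d. \<Sum>w\<in>words d n. word_prob \<alpha> (a # w) * f (a # w))"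
    by (simp add: sum.cartesian_product case_prod_beta)
  also have "\<dots> = (\<Sum>a=1..d. \<alpha> a * E_SW d n \<alpha> (\<lambda>w. f (a # w)))"
    by (simp add: E_SW_def word_prob_Cons sum_distrib_left mult.assoc)
  finally show ?thesis .
qed

lemma word_prob_nonneg:
  assumes "prob_dist d \<alpha>" "w \<in> words d n"
  shows "word_prob \<alpha> w \<ge> 0"
  using assms unfolding word_prob_def prob_dist_def words_def
  by (auto intro!: prod_nonneg) (meson nth_mem subsetD)

lemma E_one:
  assumes "prob_dist d \<alpha>"
  shows "E_SW d n \<alpha> (\<lambda>_. 1) = 1"
proof (induction n)
  case 0
  then show ?case by (simp add: E_SW_def words_0 word_prob_def)
next
  case (Suc n)
  then show ?case using assms by (simp add: E_Suc prob_dist_def)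
qed

lemma tv_bound:
  fixes g :: "nat \<Rightarrow> real"
  assumes "prob_dist d \<alpha>" "prob_dist d \<alpha>'"
    and gc: "\<And>a b. a \<in> {1..d} \<Longrightarrow> b \<in> {1..d} \<Longrightarrow> \<bar>g a - g b\<bar> \<le> c"
  shows "\<bar>\<Sum>a=1..d. (\<alpha> a - \<alpha>' a) * g a\<bar> \<le> c * d_TV d \<alpha> \<alpha>'"
proof (cases "d = 0")
  case True
  then show ?thesis using assms(1) by (simp add: prob_dist_def)
next
  case False
  define S where "S = g ` {1..d}"
  have fS: "finite S" and neS: "S \<noteq> {}" using False by (auto simp: S_def)
  define M where "M = Max S"
  define m where "m = Min S"
  define mid where "mid = (M + m) / 2"
  obtain aM where aM: "aM \<in> {1..d}" "g aM = M" using Max_in[OF fS neS] by (auto simp: S_def M_def)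
  obtain am where am: "am \<in> {1..d}" "g am = m" using Min_in[OF fS neS] by (auto simp: S_def m_def)
  have Mm: "M - m \<le> c" using gc[OF aM(1) am(1)] aM am by simp
  have b: "\<bar>g a - mid\<bar> \<le> c / 2" if "a \<in> {1..d}" for a
  proof -
    have "g a \<le> M" "m \<le> g a" using that fS by (auto simp: M_def m_def S_def)
    then show ?thesis using Mm unfolding mid_def abs_le_iff by (auto simp: field_simps)
  qed
  have z: "(\<Sum>a=1..d. (\<alpha> a - \<alpha>' a)) = 0"
    using assms(1,2) by (simp add: prob_dist_def sum_subtractf)
  have "(\<Sum>a=1..d. (\<alpha> a - \<alpha>' a) * g a) = (\<Sum>a=1..d. (\<alpha> a - \<alpha>' a) * (g a - mid))"
    using z by (simp add: right_diff_distrib sum_subtractf sum_distrib_right[symmetric])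
  also have "\<bar>\<dots>\<bar> \<le> (\<Sum>a=1..d. \<bar>\<alpha> a - \<alpha>' a\<bar> * (c/2))"
  proof (rule order_trans[OF sum_abs], rule sum_mono)
    fix a assume "a \<in> {1..d}"
    then show "\<bar>(\<alpha> a - \<alpha>' a) * (g a - mid)\<bar> \<le> \<bar>\<alpha> a - \<alpha>' a\<bar> * (c/2)"
      unfolding abs_mult by (intro mult_left_mono b) auto
  qed
  also have "\<dots> = c * d_TV d \<alpha> \<alpha>'"
    unfolding d_TV_def sum_distrib_left sum_distrib_right by (intro sum.cong) auto
  finally show ?thesis .
qed

lemma main_ind:
  assumes pd: "prob_dist d \<alpha>" "prob_dist d \<alpha>'" and c: "c \<ge> 0"
  shows "\<forall>f. (\<forall>w\<in>words d n. \<forall>j<n. \<forall>b\<in>{1..d}. \<bar>f w - f (w[j:=b])\<bar> \<le> c)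
     \<longrightarrow> \<bar>E_SW d n \<alpha> f - E_SW d n \<alpha>' f\<bar> \<le> real n * c * d_TV d \<alpha> \<alpha>'"
proof (induction n)
  case 0
  then show ?case by (simp add: E_SW_def words_0 word_prob_def)
next
  case (Suc n)
  show ?case
  proof (intro allI impI)
    fix f :: "nat list \<Rightarrow> real"
    assume L: "\<forall>w\<in>words d (Suc n). \<forall>j<Suc n. \<forall>b\<in>{1..d}. \<bar>f w - f (w[j:=b])\<bar> \<le> c"
    define D where "D = d_TV d \<alpha> \<alpha>'"
    define g where "g a = E_SW d n \<alpha>' (\<lambda>w. f (a # w))" for a
    have cons_w: "a # w \<in> words d (Suc n)" if "a \<in> {1..d}" "w \<in> words d n" for a w
      using that by (auto simp: words_def)
    have IH: "\<bar>E_SW d n \<alpha> (\<lambda>w. f (a # w)) - g a\<bar> \<le> real n * c * D" if a: "a \<in> {1..d}" for a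
    proof -
      have "\<forall>w\<in>words d n. \<forall>j<n. \<forall>b\<in>{1..d}. \<bar>f (a # w) - f (a # w[j:=b])\<bar> \<le> c"
      proof (intro ballI allI impI)
        fix w j b assume wjb: "w \<in> words d n" "j < n" "b \<in> {1..d}"
        have "\<bar>f (a # w) - f ((a # w)[Suc j:=b])\<bar> \<le> c"
          using L cons_w[OF a wjb(1)] wjb(2,3) by (meson Suc_less_eq)
        then show "\<bar>f (a # w) - f (a # w[j:=b])\<bar> \<le> c" by simp
      qed
      then show ?thesis using Suc.IH by (simp add: g_def D_def)
    qed
    have gL: "\<bar>g a - g b\<bar> \<le> c" if "a \<in> {1..d}" "b \<in> {1..d}" for a b
    proof -
      have "g a - g b = (\<Sum>w\<in>words d n. word_prob \<alpha>' w * (f (a # w) - f (b # w)))"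
        by (simp add: g_def E_SW_def right_diff_distrib sum_subtractf)
      also have "\<bar>\<dots>\<bar> \<le> (\<Sum>w\<in>words d n. word_prob \<alpha>' w * c)"
      proof (rule order_trans[OF sum_abs], rule sum_mono)
        fix w assume w: "w \<in> words d n"
        have "\<bar>f (a # w) - f ((a # w)[0:=b])\<bar> \<le> c" using L cons_w[OF that(1) w] that(2) by blast
        then show "\<bar>word_prob \<alpha>' w * (f (a # w) - f (b # w))\<bar> \<le> word_prob \<alpha>' w * c"
          using word_prob_nonneg[OF pd(2) w] by (simp add: abs_mult mult_left_mono)
      qed
      also have "\<dots> = c" using E_one[OF pd(2), of n] by (simp add: E_SW_def sum_distrib_right[symmetric])
      finally show ?thesis .
    qed
    have al: "\<forall>a\<in>{1..d}. 0 \<le> \<alpha> a" "(\<Sum>a=1..d. \<alpha> a) = 1" using pd(1) by (auto simp: prob_dist_def)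
    have "E_SW d (Suc n) \<alpha> f - E_SW d (Suc n) \<alpha>' f
        = (\<Sum>a=1..d. \<alpha> a * (E_SW d n \<alpha> (\<lambda>w. f (a # w)) - g a)) + (\<Sum>a=1..d. (\<alpha> a - \<alpha>' a) * g a)"
      by (simp add: E_Suc g_def algebra_simps sum.distrib sum_subtractf)
    also have "\<bar>\<dots>\<bar> \<le> real n * c * D + c * D"
    proof (rule order_trans[OF abs_triangle_ineq add_mono])
      show "\<bar>\<Sum>a=1..d. (\<alpha> a - \<alpha>' a) * g a\<bar> \<le> c * D"
        unfolding D_def by (rule tv_bound[OF pd]) (rule gL)
      have "\<bar>\<Sum>a=1..d. \<alpha> a * (E_SW d n \<alpha> (\<lambda>w. f (a # w)) - g a)\<bar> \<le> (\<Sum>a=1..d. \<alpha> a * (real n * c * D))"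
        by (rule order_trans[OF sum_abs], rule sum_mono) (use al IH in \<open>auto simp: abs_mult intro!: mult_left_mono\<close>)
      also have "\<dots> = real n * c * D" using al(2) by (simp add: sum_distrib_right[symmetric])
      finally show "\<bar>\<Sum>a=1..d. \<alpha> a * (E_SW d n \<alpha> (\<lambda>w. f (a # w)) - g a)\<bar> \<le> real n * c * D" .
    qed
    also have "\<dots> = real (Suc n) * c * D" by (simp add: algebra_simps)
    finally show "\<bar>E_SW d (Suc n) \<alpha> f - E_SW d (Suc n) \<alpha>' f\<bar> \<le> real (Suc n) * c * d_TV d \<alpha> \<alpha>'"
      by (simp add: D_def)
  qed
qed

definition valid_F :: "nat list \<Rightarrow> nat \<Rightarrow> (nat \<Rightarrow> nat set) \<Rightarrow> bool" where
  "valid_F w k F \<longleftrightarrow> (\<forall>i<k. incr_set w (F i)) \<and> (\<forall>i<k. \<forall>j<k. i \<noteq> j \<longrightarrow> F i \<inter> F j = {})"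

lemma greene_alt: "greene w k = Max {card (\<Union>i<k. F i) | F. valid_F w k F}"
  by (simp add: greene_def valid_F_def)

lemma gset_finite: "finite {card (\<Union>i<k. F i) | F. valid_F w k F}"
proof (rule finite_subset[of _ "{..length w}"])
  show "{card (\<Union>i<k. F i) | F. valid_F w k F} \<subseteq> {..length w}"
  proof (rule subsetI)
    fix x assume "x \<in> {card (\<Union>i<k. F i) | F. valid_F w k F}"
    then obtain F where x: "x = card (\<Union>i<k. F i)" and "valid_F w k F" by blast
    then have "(\<Union>i<k. F i) \<subseteq> {..<length w}" by (auto simp: valid_F_def incr_set_def)
    then show "x \<in> {..length w}"
      using card_mono[of "{..<length w}"] x by fastforce
  qed
qed simp

lemma gset_ne: "{card (\<Union>i<k. F i) | F. valid_F w k F} \<noteq> {}"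
proof -
  have "valid_F w k (\<lambda>_. {})" by (simp add: valid_F_def incr_set_def)
  then show ?thesis by blast
qed

lemma greene_ge: "valid_F w k F \<Longrightarrow> card (\<Union>i<k. F i) \<le> greene w k"
  unfolding greene_alt by (rule Max_ge[OF gset_finite]) blast

lemma greene_obtain: "\<exists>F. valid_F w k F \<and> greene w k = card (\<Union>i<k. F i)"
  using Max_in[OF gset_finite gset_ne, of k w] unfolding greene_alt by auto

lemma greene_0: "greene w 0 = 0"
  using greene_obtain[of w 0] by simp

lemma greene_mono: "greene w m \<le> greene w (Suc m)"
proof -
  obtain F where F: "valid_F w m F" "greene w m = card (\<Union>i<m. F i)" using greene_obtain by blast
  define G where "G i = (if i < m then F i else {})" for i
  have "valid_F w (Suc m) G" using F(1)
    by (auto simp: valid_F_def G_def incr_set_def less_Suc_eq)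
  moreover have "(\<Union>i<Suc m. G i) = (\<Union>i<m. F i)" by (auto simp: G_def less_Suc_eq)
  ultimately show ?thesis using greene_ge[of w "Suc m" G] F(2) by simp
qed

lemma greene_upd: "greene w k \<le> greene (w[j:=b]) k + 1"
proof -
  obtain F where F: "valid_F w k F" "greene w k = card (\<Union>i<k. F i)" using greene_obtain by blast
  define G where "G i = F i - {j}" for i
  have "valid_F (w[j:=b]) k G" using F(1)
    unfolding valid_F_def G_def incr_set_def
  proof (intro conjI allI impI ballI)
    fix i assume i: "i < k"
    then show "F i - {j} \<subseteq> {..<length (w[j := b])}" using F(1) by (auto simp: valid_F_def incr_set_def)
    fix x y assume "x \<in> F i - {j}" "y \<in> F i - {j}" "x < y"
    then show "w[j := b] ! x \<le> w[j := b] ! y" using F(1) i by (auto simp: valid_F_def incr_set_def)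
  next
    fix i i' assume "i < k" "i' < k" "i \<noteq> i'"
    then show "(F i - {j}) \<inter> (F i' - {j}) = {}" using F(1) by (auto simp: valid_F_def)
  qed
  then have "card (\<Union>i<k. G i) \<le> greene (w[j:=b]) k" by (rule greene_ge)
  moreover have "(\<Union>i<k. G i) = (\<Union>i<k. F i) - {j}" by (auto simp: G_def)
  moreover have "finite (\<Union>i<k. F i)" using F(1)
    by (auto simp: valid_F_def incr_set_def intro: finite_subset[of _ "{..<length w}"])
  ultimately have "card (\<Union>i<k. F i) - 1 \<le> greene (w[j:=b]) k"
    using diff_card_le_card_Diff[of "{j}" "\<Union>i<k. F i"] by simp
  then show ?thesis using F(2) by linarith
qed

lemma greene_lip: "j < length w \<Longrightarrow> \<bar>real (greene w k) - real (greene (w[j:=b]) k)\<bar> \<le> 1"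
proof -
  assume j: "j < length w"
  have a: "greene w k \<le> greene (w[j:=b]) k + 1" by (rule greene_upd)
  have "greene (w[j:=b]) k \<le> greene ((w[j:=b])[j:=w!j]) k + 1" by (rule greene_upd)
  moreover have "(w[j:=b])[j:=w!j] = w" using j by simp
  ultimately have b: "greene (w[j:=b]) k \<le> greene w k + 1" by simp
  have a': "real (greene w k) \<le> real (greene (w[j:=b]) k) + 1" using a by (metis of_nat_le_iff of_nat_1 of_nat_add)
  have b': "real (greene (w[j:=b]) k) \<le> real (greene w k) + 1" using b by (metis of_nat_le_iff of_nat_1 of_nat_add)
  show ?thesis using a' b' by (simp add: abs_le_iff)
qed

lemma sum_shRSK: "(\<Sum>i=1..k. real (shRSK w i)) = real (greene w k)"
proof (induction k)
  case 0
  then show ?case by (simp add: greene_0)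
next
  case (Suc k)
  have "real (shRSK w (Suc k)) = real (greene w (Suc k)) - real (greene w k)"
    using greene_mono[of w k] by (simp add: shRSK_def of_nat_diff)
  then show ?case using Suc by (simp add: sum.cl_ivl_Suc)
qed

theorem mainTheorem12:
  fixes d n k :: nat and \<alpha> \<alpha>' :: "nat \<Rightarrow> real"
  assumes "prob_dist d \<alpha>" and "prob_dist d \<alpha>'"
    and "n \<ge> 1" and "k \<in> {1..d}"
  shows "\<bar>E_SW d n \<alpha> (\<lambda>w. (\<Sum>i=1..k. real (shRSK w i)) / real n)
           - E_SW d n \<alpha>' (\<lambda>w. (\<Sum>i=1..k. real (shRSK w i)) / real n)\<bar> \<le> d_TV d \<alpha> \<alpha>'
         \<and> \<bar>E_SW d n \<alpha> (\<lambda>w. real (shRSK w k) / real n)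
           - E_SW d n \<alpha>' (\<lambda>w. real (shRSK w k) / real n)\<bar> \<le> 2 * d_TV d \<alpha> \<alpha>'"
proof
  have np: "real n > 0" using assms(3) by simp
  have lenw: "length w = n" if "w \<in> words d n" for w using that by (simp add: words_def)
  have L1: "\<forall>w\<in>words d n. \<forall>j<n. \<forall>b\<in>{1..d}.
      \<bar>(\<Sum>i=1..k. real (shRSK w i)) / real n - (\<Sum>i=1..k. real (shRSK (w[j:=b]) i)) / real n\<bar> \<le> 1 / real n"
  proof (intro ballI allI impI)
    fix w j b assume "w \<in> words d n" "j < n"
    then have "\<bar>real (greene w k) - real (greene (w[j:=b]) k)\<bar> \<le> 1" using greene_lip[of j w k b] lenw by simp
    then show "\<bar>(\<Sum>i=1..k. real (shRSK w i)) / real n - (\<Sum>i=1..k. real (shRSK (w[j:=b]) i)) / real n\<bar> \<le> 1 / real n"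
      using np by (simp only: sum_shRSK diff_divide_distrib[symmetric] abs_divide abs_of_pos divide_right_mono)
  qed
  have c1: "0 \<le> 1 / real n" by simp
  from mp[OF spec[OF main_ind[OF assms(1,2) c1, of n]] L1] np
  show "\<bar>E_SW d n \<alpha> (\<lambda>w. (\<Sum>i=1..k. real (shRSK w i)) / real n)
           - E_SW d n \<alpha>' (\<lambda>w. (\<Sum>i=1..k. real (shRSK w i)) / real n)\<bar> \<le> d_TV d \<alpha> \<alpha>'"
    by simp
  have L2: "\<forall>w\<in>words d n. \<forall>j<n. \<forall>b\<in>{1..d}.
      \<bar>real (shRSK w k) / real n - real (shRSK (w[j:=b]) k) / real n\<bar> \<le> 2 / real n"
  proof (intro ballI allI impI)
    fix w j b assume "w \<in> words d n" "j < n"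
    then have 1: "\<bar>real (greene w k) - real (greene (w[j:=b]) k)\<bar> \<le> 1"
      and 2: "\<bar>real (greene w (k-1)) - real (greene (w[j:=b]) (k-1))\<bar> \<le> 1"
      using greene_lip[of j w k b] greene_lip[of j w "k-1" b] lenw by simp_all
    have e: "real (shRSK v k) = real (greene v k) - real (greene v (k-1))" for v
      using greene_mono[of v "k-1"] assms(4) by (simp add: shRSK_def of_nat_diff)
    have "\<bar>real (shRSK w k) - real (shRSK (w[j:=b]) k)\<bar> \<le> 2"
      unfolding e using 1 2 by linarith
    then show "\<bar>real (shRSK w k) / real n - real (shRSK (w[j:=b]) k) / real n\<bar> \<le> 2 / real n"
      using np by (simp add: diff_divide_distrib[symmetric] divide_right_mono)
  qed
  have c2: "0 \<le> 2 / real n" by simp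
  from mp[OF spec[OF main_ind[OF assms(1,2) c2, of n]] L2] np
  show "\<bar>E_SW d n \<alpha> (\<lambda>w. real (shRSK w k) / real n)
           - E_SW d n \<alpha>' (\<lambda>w. real (shRSK w k) / real n)\<bar> \<le> 2 * d_TV d \<alpha> \<alpha>'"
    by simp
qed

end
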